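(* Let $H$, $L$ be as in the context with $L\mid Z$, let $\omega_{LB}=\lceil\omega(H)/L\rceil$, and let $\mathcal T_0=\{x\in[MZ): x\equiv 0\pmod L\}$ (equivalently $\mathcal T_0=\bigcup_{m\in[M)}\{mZ+((rL)\bmod Z):r\in\mathbb Z\}$). Then $(1,\mathcal T_0)$ is an optimal solution with $\omega(H_{\mathcal T_0})=\omega_{LB}$ if and only if $|\{x\in\mathcal N(v_j): x\equiv 0\pmod L\}|\le\omega_{LB}$ for all $j\in[NZ)$, with equality for some $j$.
   Context: Notation: $[n)=\{0,1,\dots,n-1\}$. Let $M,N,Z$ be positive integers and let $H$ be a binary $MZ\times NZ$ matrix made of $M\times N$ blocks, each a $Z\times Z$ circulant; assume $H$ has no zero row and no two identical rows. For $j\in[NZ)$, $\mathcal N(v_j)=\{i\in[MZ): H[i][j]=1\}$ (the rows with a $1$ in column $j$). For $\mathcal A\subseteq[MZ)$, $H_{\mathcal A}$ is the submatrix of rows indexed by $\mathcal A$; $\omega(A)$ is the maximum Hamming weight of a column of $A$. For $i\in[MZ)$ and integer $s$, $\pi^s(i)=Z\lfloor i/Z\rfloor+((i+s)\bmod Z)$ and $\pi^s(\mathcal T)=\{\pi^s(x):x\in\mathcal T\}$. Fix an integer $L>1$. A pair $(S,\mathcal T_0)$ ($S$ a positive integer, $\mathcal T_0\subseteq[MZ)$) is a feasible solution if, with $\mathcal T_l=\pi^{lS}(\mathcal T_0)$ for $l\in[L)$, the sets $\mathcal T_0,\dots,\mathcal T_{L-1}$ are pairwise disjoint with union $[MZ)$.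 An optimal solution is a feasible solution minimizing $\omega(H_{\mathcal T_0})$ over all feasible solutions. *)

theory Defs
  imports Complex_Main
begin

text \<open>A binary MZ x NZ matrix is represented as H :: nat => nat => bool
  (H i j = True iff the entry in row i, column j is 1); only entries with
  i < M*Z and j < N*Z matter.\<close>

text \<open>H consists of M x N blocks, each a Z x Z circulant matrix:
  shifting both the row and column index cyclically by one inside a block
  does not change the entry.\<close>
definition block_circulant :: "nat \<Rightarrow> nat \<Rightarrow> nat \<Rightarrow> (nat \<Rightarrow> nat \<Rightarrow> bool) \<Rightarrow> bool" where
  "block_circulant M N Z H \<longleftrightarrow>
     (\<forall>m<M. \<forall>n<N. \<forall>a<Z. \<forall>b<Z.
        H (m*Z + (a+1) mod Z) (n*Z + (b+1) mod Z) = H (m*Z + a) (n*Z + b))"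

definition no_zero_row :: "nat \<Rightarrow> nat \<Rightarrow> (nat \<Rightarrow> nat \<Rightarrow> bool) \<Rightarrow> bool" where
  "no_zero_row nrows ncols H \<longleftrightarrow> (\<forall>i<nrows. \<exists>j<ncols. H i j)"

definition distinct_rows :: "nat \<Rightarrow> nat \<Rightarrow> (nat \<Rightarrow> nat \<Rightarrow> bool) \<Rightarrow> bool" where
  "distinct_rows nrows ncols H \<longleftrightarrow>
     (\<forall>i<nrows. \<forall>i'<nrows. i \<noteq> i' \<longrightarrow> (\<exists>j<ncols. H i j \<noteq> H i' j))"

definition nbhd :: "nat \<Rightarrow> (nat \<Rightarrow> nat \<Rightarrow> bool) \<Rightarrow> nat \<Rightarrow> nat set" where
  "nbhd nrows H j = {i. i < nrows \<and> H i j}"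

definition omega :: "nat \<Rightarrow> (nat \<Rightarrow> nat \<Rightarrow> bool) \<Rightarrow> nat set \<Rightarrow> nat" where
  "omega ncols H A = Max ((\<lambda>j. card {i \<in> A. H i j}) ` {..<ncols})"

definition piZ :: "nat \<Rightarrow> int \<Rightarrow> nat \<Rightarrow> nat" where
  "piZ Z s i = Z * (i div Z) + nat ((int i + s) mod int Z)"

definition feasible :: "nat \<Rightarrow> nat \<Rightarrow> nat \<Rightarrow> nat \<Rightarrow> nat set \<Rightarrow> bool" where
  "feasible M Z L S T0 \<longleftrightarrow> S > 0 \<and> T0 \<subseteq> {..<M*Z} \<and>
     (\<forall>l<L. \<forall>l'<L. l \<noteq> l' \<longrightarrow>
        piZ Z (int l * int S) ` T0 \<inter> piZ Z (int l' * int S) ` T0 = {}) \<and>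
     (\<Union>l<L. piZ Z (int l * int S) ` T0) = {..<M*Z}"

definition optimal :: "nat \<Rightarrow> nat \<Rightarrow> nat \<Rightarrow> nat \<Rightarrow> (nat \<Rightarrow> nat \<Rightarrow> bool) \<Rightarrow> nat \<Rightarrow> nat set \<Rightarrow> bool" where
  "optimal M N Z L H S T0 \<longleftrightarrow> feasible M Z L S T0 \<and>
     (\<forall>S' T0'. feasible M Z L S' T0' \<longrightarrow> omega (N*Z) H T0 \<le> omega (N*Z) H T0')"

end

theory Submission
  imports Defs
begin

lemma piZ_lt: "0<Z \<Longrightarrow> nat ((int i + s) mod int Z) < Z"
  by (metis nat_less_iff of_nat_0_less_iff pos_mod_bound pos_mod_sign)

lemma piZ_div: "0<Z \<Longrightarrow> piZ Z s i div Z = i div Z"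
  unfolding piZ_def using piZ_lt[of Z i s] by simp

lemma piZ_mod: "0<Z \<Longrightarrow> piZ Z s i mod Z = nat ((int i + s) mod int Z)"
  unfolding piZ_def using piZ_lt[of Z i s] by simp

lemma piZ_0: "0<Z \<Longrightarrow> piZ Z 0 i = i"
  unfolding piZ_def
proof -
  have "nat (int i mod int Z) = i mod Z" by (metis nat_int zmod_int)
  thus "Z * (i div Z) + nat ((int i + 0) mod int Z) = i" by simp
qed

lemma piZ_comp: assumes "0<Z" shows "piZ Z t (piZ Z s i) = piZ Z (s+t) i"
proof -
  have "int (piZ Z s i mod Z) = (int i + s) mod int Z" using piZ_mod[OF assms] assms by simp
  hence "(int (piZ Z s i) + t) mod int Z = (int i + (s + t)) mod int Z"
    by (metis (no_types, opaque_lifting) add.assoc mod_add_left_eq of_nat_mod)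
  thus ?thesis unfolding piZ_def[of Z t] using piZ_div[OF assms] piZ_def[of Z "s+t"] by simp
qed

lemma piZ_inj: assumes "0<Z" "piZ Z s x = piZ Z s y" shows "x = y"
  by (metis assms piZ_0 piZ_comp add.right_inverse)

lemma piZ_bound: "0<Z \<Longrightarrow> i < K*Z \<Longrightarrow> piZ Z s i < K*Z"
  by (metis div_less_iff_less_mult piZ_div)

lemma circ_iter:
  assumes bc: "block_circulant M N Z H" and m: "m<M" and n: "n<N"
  shows "a<Z \<Longrightarrow> b<Z \<Longrightarrow> H (m*Z + (a+k) mod Z) (n*Z + (b+k) mod Z) = H (m*Z + a) (n*Z + b)"
proof (induction k)
  case 0 thus ?case by simp
next
  case (Suc k)
  have Z: "0<Z" using Suc.prems by simp
  have "H (m*Z + ((a+k) mod Z+1) mod Z) (n*Z + ((b+k) mod Z+1) mod Z) = H (m*Z + (a+k) mod Z) (n*Z + (b+k) mod Z)"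
    using bc m n Z unfolding block_circulant_def by simp
  moreover have "((a+k) mod Z+1) mod Z = (a + Suc k) mod Z" "((b+k) mod Z+1) mod Z = (b + Suc k) mod Z"
    by (simp_all add: mod_Suc_eq)
  ultimately show ?case using Suc by simp
qed

lemma piZ_repr: assumes "0<Z" shows "piZ Z s i = (i div Z)*Z + (i mod Z + nat (s mod int Z)) mod Z"
proof -
  have "(int i + s) mod int Z = (int (i mod Z) + s mod int Z) mod int Z"
    by (metis mod_add_eq of_nat_mod)
  also have "\<dots> = int ((i mod Z + nat (s mod int Z)) mod Z)"
    using assms by (simp add: zmod_int)
  finally show ?thesis unfolding piZ_def by (simp add: mult.commute)
qed

lemma circ:
  assumes bc: "block_circulant M N Z H" and Z: "0<Z" and i: "i < M*Z" and j: "j < N*Z"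
  shows "H (piZ Z s i) (piZ Z s j) = H i j"
proof -
  have m: "i div Z < M" and n: "j div Z < N" using i j Z by (simp_all add: div_less_iff_less_mult)
  show ?thesis
    using circ_iter[OF bc m n, of "i mod Z" "j mod Z" "nat (s mod int Z)"] Z
    by (simp add: piZ_repr[OF Z] mult.commute)
qed

lemma shift_T0: assumes "L dvd Z" "0<Z" "l < L" "x mod L = 0" shows "piZ Z (int l) x = x + l"
proof -
  obtain q where q: "Z = L*q" using assms(1) by auto
  have "x mod Z mod L = 0" using assms by (simp add: mod_mod_cancel)
  then obtain k where k: "x mod Z = L*k" by auto
  have "L*k < L*q" using k q assms(2) by (metis mod_less_divisor)
  hence "k < q" by (simp add: mult_less_cancel1)
  hence "L*(k+1) \<le> L*q" by (metis Suc_eq_plus1 Suc_leI mult_le_mono2)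
  hence lt: "x mod Z + l < Z" using k q assms(3) by (simp add: algebra_simps)
  have "(int x + int l) mod int Z = int ((x + l) mod Z)" by (simp add: zmod_int)
  also have "(x + l) mod Z = x mod Z + l" using lt by (metis mod_add_left_eq mod_less)
  finally have "nat ((int x + int l) mod int Z) = x mod Z + l" by simp
  thus ?thesis unfolding piZ_def by simp
qed

theorem lemma3:
  fixes M N Z L :: nat and H :: "nat \<Rightarrow> nat \<Rightarrow> bool"
  assumes "M > 0" and "N > 0" and "Z > 0"
    and "block_circulant M N Z H"
    and "no_zero_row (M*Z) (N*Z) H"
    and "distinct_rows (M*Z) (N*Z) H"
    and "L > 1" and "L dvd Z"
  defines "wLB \<equiv> nat \<lceil>real (omega (N*Z) H {..<M*Z}) / real L\<rceil>"
    and "T0 \<equiv> {x. x < M*Z \<and> x mod L = 0}"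
  shows "(optimal M N Z L H 1 T0 \<and> omega (N*Z) H T0 = wLB) \<longleftrightarrow>
         ((\<forall>j<N*Z. card {x \<in> nbhd (M*Z) H j. x mod L = 0} \<le> wLB) \<and>
          (\<exists>j<N*Z. card {x \<in> nbhd (M*Z) H j. x mod L = 0} = wLB))"
proof -
  have Z: "0<Z" using assms(3) .
  have NZ: "0 < N*Z" using assms(2,3) by simp
  have Ldvd: "L dvd Z" using assms(8) .
  define cnt where "cnt j = card {x \<in> nbhd (M*Z) H j. x mod L = 0}" for j
  have seteq: "\<And>j. {i \<in> T0. H i j} = {x \<in> nbhd (M*Z) H j. x mod L = 0}"
    by (auto simp: T0_def nbhd_def)
  have om0: "omega (N*Z) H T0 = Max (cnt ` {..<N*Z})"
    unfolding omega_def cnt_def seteq ..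
  have fin: "finite (cnt ` {..<N*Z})" by simp
  have ne: "cnt ` {..<N*Z} \<noteq> {}" proof -
    have "0 \<in> {..<N*Z}" using NZ by simp
    thus ?thesis by blast
  qed
  have rhs: "((\<forall>j<N*Z. card {x \<in> nbhd (M*Z) H j. x mod L = 0} \<le> wLB) \<and>
          (\<exists>j<N*Z. card {x \<in> nbhd (M*Z) H j. x mod L = 0} = wLB)) \<longleftrightarrow> omega (N*Z) H T0 = wLB"
    unfolding om0 Max_eq_iff[OF fin ne] cnt_def by auto
  have img: "piZ Z (int l * int 1) ` T0 = {y. y < M*Z \<and> y mod L = l}" if l: "l < L" for l
  proof
    show "piZ Z (int l * int 1) ` T0 \<subseteq> {y. y < M*Z \<and> y mod L = l}"
    proof
      fix y assume "y \<in> piZ Z (int l * int 1) ` T0"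
      then obtain x where x: "x \<in> T0" "y = piZ Z (int l) x" by auto
      have xl: "x < M*Z" "x mod L = 0" using x(1) unfolding T0_def by auto
      have "y = x + l" using x(2) shift_T0[OF Ldvd Z l xl(2)] by simp
      moreover have "y < M*Z" using x(2) piZ_bound[OF Z xl(1)] by simp
      moreover have "(x + l) mod L = l"
      proof -
        have "(x + l) mod L = (x mod L + l) mod L" by (rule mod_add_left_eq[symmetric])
        also have "\<dots> = l" using l xl(2) by simp
        finally show ?thesis .
      qed
      ultimately show "y \<in> {y. y < M*Z \<and> y mod L = l}" by simp
    qed
  next
    show "{y. y < M*Z \<and> y mod L = l} \<subseteq> piZ Z (int l * int 1) ` T0"
    proof
      fix y assume "y \<in> {y. y < M*Z \<and> y mod L = l}"
      hence y1: "y < M*Z" and y2: "y mod L = l" by auto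
      define x where "x = y - l"
      have ly: "l \<le> y" using y2 mod_less_eq_dividend by metis
      have "y - y mod L = L * (y div L)" by (rule minus_mod_eq_mult_div)
      hence "x = L * (y div L)" using y2 unfolding x_def by simp
      hence x0: "x mod L = 0" by simp
      have "x < M*Z" using y1 unfolding x_def by simp
      hence xT: "x \<in> T0" using x0 unfolding T0_def by simp
      have "piZ Z (int l) x = y" using shift_T0[OF Ldvd Z l x0] ly x_def by simp
      hence "y = piZ Z (int l * int 1) x" by simp
      thus "y \<in> piZ Z (int l * int 1) ` T0" using xT by (rule image_eqI)
    qed
  qed
  have feas: "feasible M Z L 1 T0"
    unfolding feasible_def
  proof (intro conjI)
    show "T0 \<subseteq> {..<M*Z}" by (auto simp: T0_def)
    show "\<forall>l<L. \<forall>l'<L. l \<noteq> l' \<longrightarrow>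
        piZ Z (int l * int 1) ` T0 \<inter> piZ Z (int l' * int 1) ` T0 = {}"
      using img by auto
    show "(\<Union>l<L. piZ Z (int l * int 1) ` T0) = {..<M*Z}"
    proof
      show "(\<Union>l<L. piZ Z (int l * int 1) ` T0) \<subseteq> {..<M*Z}" using img by auto
      show "{..<M*Z} \<subseteq> (\<Union>l<L. piZ Z (int l * int 1) ` T0)"
      proof
        fix y assume y: "y \<in> {..<M*Z}"
        have ml: "y mod L < L" using assms(7) by simp
        hence m: "y mod L \<in> {..<L}" by simp
        have "y \<in> piZ Z (int (y mod L) * int 1) ` T0"
          unfolding img[OF ml] using y by simp
        thus "y \<in> (\<Union>l<L. piZ Z (int l * int 1) ` T0)"
          by (rule UN_I[OF m])
      qed
    qed
  qed simp
  have lb: "wLB \<le> omega (N*Z) H T" if fT: "feasible M Z L S T" for S T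
  proof -
    have Tsub: "T \<subseteq> {..<M*Z}"
      and disj: "\<forall>l<L. \<forall>l'<L. l \<noteq> l' \<longrightarrow>
        piZ Z (int l * int S) ` T \<inter> piZ Z (int l' * int S) ` T = {}"
      and cov: "(\<Union>l<L. piZ Z (int l * int S) ` T) = {..<M*Z}"
      using fT unfolding feasible_def by auto
    define W where "W = omega (N*Z) H {..<M*Z}"
    define f where "f l = piZ Z (int l * int S)" for l
    define g where "g l = piZ Z (- (int l * int S))" for l
    have finW: "finite ((\<lambda>j. card {i \<in> {..<M*Z}. H i j}) ` {..<N*Z})" by simp
    have neW: "(\<lambda>j. card {i \<in> {..<M*Z}. H i j}) ` {..<N*Z} \<noteq> {}"
    proof -
      have "0 \<in> {..<N*Z}" using NZ by simp
      thus ?thesis by blast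
    qed
    obtain j0 where j0: "j0 < N*Z" "card {i \<in> {..<M*Z}. H i j0} = W"
      using Max_in[OF finW neW] unfolding W_def omega_def by auto
    have piece: "{i \<in> f l ` T. H i j0} = f l ` {i \<in> T. H i (g l j0)}" for l
    proof -
      have "H (f l i) j0 = H i (g l j0)" if iT: "i \<in> T" for i
      proof -
        have i: "i < M*Z" using iT Tsub by auto
        have fi: "f l i < M*Z" unfolding f_def using piZ_bound[OF Z i] .
        have "H (g l (f l i)) (g l j0) = H (f l i) j0"
          unfolding g_def using circ[OF assms(4) Z fi j0(1)] .
        moreover have "g l (f l i) = i" unfolding f_def g_def
          using piZ_comp[OF Z] piZ_0[OF Z] by simp
        ultimately show ?thesis by simp
      qed
      thus ?thesis by auto
    qed
    have finT: "finite T" using Tsub finite_subset by blast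
    have cardp: "card {i \<in> f l ` T. H i j0} \<le> omega (N*Z) H T" for l
    proof -
      have "inj_on (f l) {i \<in> T. H i (g l j0)}"
        unfolding f_def by (meson inj_onI piZ_inj[OF Z])
      hence "card {i \<in> f l ` T. H i j0} = card {i \<in> T. H i (g l j0)}"
        unfolding piece by (rule card_image)
      also have "\<dots> \<le> omega (N*Z) H T"
        unfolding omega_def
        by (rule Max_ge) (use piZ_bound[OF Z j0(1)] g_def in auto)
      finally show ?thesis .
    qed
    have cov': "(\<Union>l<L. f l ` T) = {..<M*Z}" using cov unfolding f_def .
    have "{i \<in> {..<M*Z}. H i j0} = {i \<in> (\<Union>l<L. f l ` T). H i j0}"
      by (simp only: cov')
    also have "\<dots> = (\<Union>l\<in>{..<L}. {i \<in> f l ` T. H i j0})" by blast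
    finally have un: "{i \<in> {..<M*Z}. H i j0} = (\<Union>l\<in>{..<L}. {i \<in> f l ` T. H i j0})" .
    have "W = card (\<Union>l\<in>{..<L}. {i \<in> f l ` T. H i j0})" using j0 un by simp
    also have "\<dots> = (\<Sum>l<L. card {i \<in> f l ` T. H i j0})"
      by (rule card_UN_disjoint) (use finT disj f_def in auto)
    also have "\<dots> \<le> (\<Sum>l<L. omega (N*Z) H T)" by (rule sum_mono) (rule cardp)
    finally have "W \<le> L * omega (N*Z) H T" by simp
    hence "real W / real L \<le> real (omega (N*Z) H T)" using assms(7)
      by (simp add: divide_le_eq mult.commute) (metis of_nat_le_iff of_nat_mult)
    hence "\<lceil>real W / real L\<rceil> \<le> int (omega (N*Z) H T)"
      by (simp add: ceiling_le_iff)
    thus ?thesis unfolding wLB_def W_def by (simp only: nat_le_iff)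
  qed
  show ?thesis using rhs feas lb unfolding optimal_def by auto
qed

end
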